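(* Let $\bm v_1,\dots,\bm v_N\in\mathbb{S}^{r-1}$ form a unit norm tight frame, let $\bm V\in\mathbb{R}^{r\times N}$ have the $\bm v_i$ as columns, $\bm X := \bm V^\top\bm V$, and suppose the matrices $\bm v_1\bm v_1^\top,\dots,\bm v_N\bm v_N^\top$ are linearly independent (equivalently, $\bm X^{\odot 2}$ is nonsingular). Let $$V'_{\mathrm{sym}} := \{\mathrm{vec}(\bm S\bm V):\bm S\in\mathbb{R}^{r\times r}_{\mathrm{sym}},\ \bm v_i^\top\bm S\bm v_i = 0\ \forall i\in[N]\}.$$ Then the orthogonal projection matrix $\bm P_{V'_{\mathrm{sym}}}\in\mathbb{R}^{rN\times rN}$ has blocks $$(\bm P_{V'_{\mathrm{sym}}})_{[ij]} = \frac{r}{N}\Big(\tfrac12\langle\bm v_i,\bm v_j\rangle\bm I_r + \tfrac12\bm v_j\bm v_i^\top - \sum_{k=1}^N\sum_{\ell=1}^N\big((\bm X^{\odot2})^{-1}\big)_{k\ell}\langle\bm v_i,\bm v_k\rangle\langle\bm v_j,\bm v_\ell\rangle\bm v_k\bm v_\ell^\top\Big).$$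
   Context: Unit vectors $\bm v_1,\dots,\bm v_N\in\mathbb{R}^r$ form a unit norm tight frame if $\sum_i\bm v_i\bm v_i^\top = \frac{N}{r}\bm I_r$. $\mathrm{vec}(\bm V) = (\bm v_1;\dots;\bm v_N)\in\mathbb{R}^{rN}$. $\bm X^{\odot 2}$ is the entrywise square of $\bm X$. Matrices in $\mathbb{R}^{rN\times rN}$ are viewed as $N\times N$ arrays of $r\times r$ blocks, $(i,j)$ block written $(\cdot)_{[ij]}$. *)

theory Defs
  imports "HOL-Analysis.Analysis"
begin

definition outer :: "real^'r \<Rightarrow> real^'r \<Rightarrow> real^'r^'r" where
  "outer u w = (\<chi> a b. u $ a * w $ b)"

text \<open>Vectors in R^{rN} are represented as elements of real^'r^'n (N blocks of size r);
  the Euclidean inner product on this type is the standard one on R^{rN}.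
  An rN x rN matrix given by its r x r blocks B i j acts by
  (B x)_i = sum_j B_[ij] x_j.\<close>
definition block_apply :: "('n::finite \<Rightarrow> 'n \<Rightarrow> real^'r^'r) \<Rightarrow> real^'r^'n \<Rightarrow> real^'r^'n" where
  "block_apply B x = (\<chi> i. \<Sum>j\<in>UNIV. B i j *v (x $ j))"

definition is_orthogonal_projection :: "('a::real_inner \<Rightarrow> 'a) \<Rightarrow> 'a set \<Rightarrow> bool" where
  "is_orthogonal_projection P W \<longleftrightarrow> (\<forall>x. P x \<in> W \<and> (\<forall>w\<in>W. inner (x - P x) w = 0))"

definition vecSV :: "real^'r^'r \<Rightarrow> ('n::finite \<Rightarrow> real^'r) \<Rightarrow> real^'r^'n" where
  "vecSV S v = (\<chi> i. S *v v i)"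

definition Vsym' :: "('n::finite \<Rightarrow> real^'r) \<Rightarrow> (real^'r^'n) set" where
  "Vsym' v = {vecSV S v | S. transpose S = S \<and> (\<forall>i. v i \<bullet> (S *v v i) = 0)}"

end

theory Submission
  imports Defs
begin

lemma outer_mv: "outer u w *v y = (w \<bullet> y) *\<^sub>R u"
  by (simp add: outer_def vec_eq_iff matrix_vector_mult_def inner_vec_def sum_distrib_left mult_ac)

lemma sum_mv: "finite A \<Longrightarrow> (\<Sum>k\<in>A. f k) *v (y::real^'b) = (\<Sum>k\<in>A. f k *v y)"
  by (induction A rule: finite_induct) (auto simp: matrix_vector_mult_add_rdistrib)

lemma scaleR_mv: "(c *\<^sub>R (A::real^'b^'a)) *v y = c *\<^sub>R (A *v y)"
  by (simp add: vec_eq_iff matrix_vector_mult_def sum_distrib_left mult_ac)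

lemma sym_inner: "transpose (T::real^'a^'a) = T \<Longrightarrow> x \<bullet> (T *v y) = (T *v x) \<bullet> y"
  by (metis dot_lmul_matrix transpose_matrix_vector)

lemma outer_inner: "outer u u \<bullet> outer w w = (u \<bullet> w)^2"
  by (simp add: outer_def inner_vec_def power2_eq_square sum_product mult_ac)


theorem proposition13:
  fixes v :: "'n::finite \<Rightarrow> real^'r"
  assumes unit: "\<forall>i. norm (v i) = 1"
    and tight: "(\<Sum>i\<in>UNIV. outer (v i) (v i)) = (real CARD('n) / real CARD('r)) *\<^sub>R mat 1"
    and indep: "\<forall>c :: 'n \<Rightarrow> real. (\<Sum>i\<in>UNIV. c i *\<^sub>R outer (v i) (v i)) = 0 \<longrightarrow> (\<forall>i. c i = 0)"
  shows "is_orthogonal_projection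
           (block_apply (\<lambda>i j.
              (real CARD('r) / real CARD('n)) *\<^sub>R
                ((1/2 * (v i \<bullet> v j)) *\<^sub>R mat 1 + (1/2) *\<^sub>R outer (v j) (v i)
                 - (\<Sum>k\<in>UNIV. \<Sum>l\<in>UNIV.
                      (matrix_inv (\<chi> a b. (v a \<bullet> v b)^2) $ k $ l * (v i \<bullet> v k) * (v j \<bullet> v l))
                        *\<^sub>R outer (v k) (v l)))))
           (Vsym' v)"
proof -
  define N where "N = real CARD('n)"
  define r where "r = real CARD('r)"
  have Npos: "N > 0" and rpos: "r > 0" by (simp_all add: N_def r_def)
  define G :: "real^'n^'n" where "G = (\<chi> a b. (v a \<bullet> v b)^2)"
  define Gi where "Gi = matrix_inv G"
  have TF: "(\<Sum>i\<in>UNIV. (a \<bullet> v i) * (b \<bullet> v i)) = (N / r) * (a \<bullet> b)" for a b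
  proof -
    have "(\<Sum>i\<in>UNIV. outer (v i) (v i)) *v b = (N / r) *\<^sub>R b"
      using tight by (simp add: N_def r_def scaleR_mv)
    then have "(\<Sum>i\<in>UNIV. (v i \<bullet> b) *\<^sub>R v i) = (N / r) *\<^sub>R b"
      by (simp add: sum_mv outer_mv)
    then have "a \<bullet> (\<Sum>i\<in>UNIV. (v i \<bullet> b) *\<^sub>R v i) = a \<bullet> ((N / r) *\<^sub>R b)" by simp
    then show ?thesis by (simp add: inner_sum_right inner_commute mult.commute)
  qed
  have ker: "\<forall>z. G *v z = 0 \<longrightarrow> z = 0"
  proof (intro allI impI)
    fix z assume Gz: "G *v z = 0"
    define Q where "Q = (\<Sum>k\<in>UNIV. (z $ k) *\<^sub>R outer (v k) (v k))"
    have "Q \<bullet> Q = (\<Sum>k\<in>UNIV. \<Sum>l\<in>UNIV. z $ k * (z $ l * (outer (v l) (v l) \<bullet> outer (v k) (v k))))"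
      by (simp add: Q_def inner_sum_left inner_sum_right sum_distrib_left)
    also have "\<dots> = (\<Sum>k\<in>UNIV. z $ k * (G *v z) $ k)"
    proof -
      have oi: "outer (v l) (v l) \<bullet> outer (v k) (v k) = (v k \<bullet> v l)^2" for k l
        by (simp add: outer_inner inner_commute)
      show ?thesis by (simp add: oi G_def matrix_vector_mult_def sum_distrib_left mult_ac)
    qed
    also have "\<dots> = 0" using Gz by simp
    finally have "Q = 0" by simp
    then have "\<forall>i. z $ i = 0" using indep unfolding Q_def by blast
    then show "z = 0" by (simp add: vec_eq_iff)
  qed
  have GGi: "G ** Gi = mat 1"
  proof -
    have "invertible G" using ker matrix_left_invertible_ker invertible_left_inverse by blast
    then show ?thesis unfolding Gi_def matrix_inv_def invertible_def by (rule someI2_ex) auto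
  qed
  define B where "B = (\<lambda>i j.
              (real CARD('r) / real CARD('n)) *\<^sub>R
                ((1/2 * (v i \<bullet> v j)) *\<^sub>R mat 1 + (1/2) *\<^sub>R outer (v j) (v i)
                 - (\<Sum>k\<in>UNIV. \<Sum>l\<in>UNIV.
                      (matrix_inv (\<chi> a b. (v a \<bullet> v b)^2) $ k $ l * (v i \<bullet> v k) * (v j \<bullet> v l))
                        *\<^sub>R outer (v k) (v l))))"
  have Bmv: "B i j *v y = (r / N) *\<^sub>R ((1/2 * (v i \<bullet> v j)) *\<^sub>R y + (1/2 * (v i \<bullet> y)) *\<^sub>R v j
        - (\<Sum>k\<in>UNIV. \<Sum>l\<in>UNIV. (Gi $ k $ l * (v i \<bullet> v k) * (v j \<bullet> v l) * (v l \<bullet> y)) *\<^sub>R v k))" for i j y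
    by (simp add: B_def N_def r_def G_def Gi_def scaleR_mv sum_mv outer_mv matrix_vector_mult_diff_rdistrib
        matrix_vector_mult_add_rdistrib)
  show ?thesis
    unfolding is_orthogonal_projection_def B_def[symmetric]
  proof (intro allI conjI ballI)
    fix x :: "real^'r^'n"
    define c where "c l = (\<Sum>j\<in>UNIV. (v j \<bullet> v l) * (x $ j \<bullet> v l))" for l
    define d where "d k = (\<Sum>l\<in>UNIV. Gi $ k $ l * c l)" for k
    define S where "S = (r / N) *\<^sub>R ((1/2) *\<^sub>R (\<Sum>j\<in>UNIV. outer (x $ j) (v j) + outer (v j) (x $ j))
          - (\<Sum>k\<in>UNIV. d k *\<^sub>R outer (v k) (v k)))"
    have Smv: "S *v y = (r / N) *\<^sub>R ((1/2) *\<^sub>R (\<Sum>j\<in>UNIV. (v j \<bullet> y) *\<^sub>R x $ j + (x $ j \<bullet> y) *\<^sub>R v j)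
          - (\<Sum>k\<in>UNIV. (d k * (v k \<bullet> y)) *\<^sub>R v k))" for y
      by (simp add: S_def scaleR_mv sum_mv outer_mv matrix_vector_mult_diff_rdistrib matrix_vector_mult_add_rdistrib)
    have Ssym: "transpose S = S"
      by (simp add: vec_eq_iff transpose_def S_def outer_def) (simp add: ac_simps)
    have dG: "(\<Sum>k\<in>UNIV. d k * G $ i $ k) = c i" for i
    proof -
      have "(\<Sum>k\<in>UNIV. d k * G $ i $ k) = (\<Sum>k\<in>UNIV. \<Sum>l\<in>UNIV. G $ i $ k * Gi $ k $ l * c l)"
        by (simp add: d_def sum_distrib_right sum_distrib_left mult_ac)
      also have "\<dots> = (\<Sum>l\<in>UNIV. \<Sum>k\<in>UNIV. G $ i $ k * Gi $ k $ l * c l)"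
        by (rule sum.swap)
      also have "\<dots> = (\<Sum>l\<in>UNIV. (G ** Gi) $ i $ l * c l)"
        by (simp add: matrix_matrix_mult_def sum_distrib_right)
      also have "\<dots> = (\<Sum>l\<in>UNIV. if l = i then c l else 0)"
        by (rule sum.cong) (auto simp: GGi mat_def)
      also have "\<dots> = c i" by simp
      finally show ?thesis .
    qed
    have PS: "block_apply B x = vecSV S v"
    proof -
      have "(\<Sum>j\<in>UNIV. B i j *v x $ j) = S *v v i" for i
      proof -
        define f where "f j k l = Gi $ k $ l * (v i \<bullet> v k) * (v j \<bullet> v l) * (v l \<bullet> x $ j)" for j k l
        have e1: "(\<Sum>j\<in>UNIV. B i j *v x $ j) = (r / N) *\<^sub>R
            ((\<Sum>j\<in>UNIV. (1/2 * (v i \<bullet> v j)) *\<^sub>R x $ j + (1/2 * (v i \<bullet> x $ j)) *\<^sub>R v j)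
             - (\<Sum>j\<in>UNIV. \<Sum>k\<in>UNIV. \<Sum>l\<in>UNIV. f j k l *\<^sub>R v k))"
          by (simp add: Bmv f_def scaleR_sum_right[symmetric] sum_subtractf)
        have e2: "(\<Sum>j\<in>UNIV. (1/2 * (v i \<bullet> v j)) *\<^sub>R x $ j + (1/2 * (v i \<bullet> x $ j)) *\<^sub>R v j)
            = (1/2) *\<^sub>R (\<Sum>j\<in>UNIV. (v j \<bullet> v i) *\<^sub>R x $ j + (x $ j \<bullet> v i) *\<^sub>R v j)"
          by (simp add: scaleR_sum_right scaleR_right_distrib inner_commute)
        have "(\<Sum>j\<in>UNIV. \<Sum>k\<in>UNIV. \<Sum>l\<in>UNIV. f j k l *\<^sub>R v k)
            = (\<Sum>k\<in>UNIV. \<Sum>j\<in>UNIV. \<Sum>l\<in>UNIV. f j k l *\<^sub>R v k)"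
          by (rule sum.swap)
        also have "\<dots> = (\<Sum>k\<in>UNIV. (\<Sum>j\<in>UNIV. \<Sum>l\<in>UNIV. f j k l) *\<^sub>R v k)"
          by (simp add: scaleR_sum_left)
        also have "\<dots> = (\<Sum>k\<in>UNIV. (d k * (v k \<bullet> v i)) *\<^sub>R v k)"
        proof (rule sum.cong[OF refl])
          fix k
          have "(\<Sum>j\<in>UNIV. \<Sum>l\<in>UNIV. f j k l) = (\<Sum>l\<in>UNIV. \<Sum>j\<in>UNIV. f j k l)"
            by (rule sum.swap)
          also have "\<dots> = d k * (v k \<bullet> v i)"
            by (simp add: f_def d_def c_def sum_distrib_left sum_distrib_right mult_ac inner_commute)
          finally show "(\<Sum>j\<in>UNIV. \<Sum>l\<in>UNIV. f j k l) *\<^sub>R v k = (d k * (v k \<bullet> v i)) *\<^sub>R v k"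
            by simp
        qed
        finally show ?thesis using e1 e2 by (simp add: Smv)
      qed
      then show ?thesis by (simp add: block_apply_def vecSV_def vec_eq_iff)
    qed
    have Sdiag: "v i \<bullet> (S *v v i) = 0" for i
    proof -
      have "v i \<bullet> (S *v v i) = (r / N) * ((1/2) * (\<Sum>j\<in>UNIV. (v j \<bullet> v i) * (x $ j \<bullet> v i) + (x $ j \<bullet> v i) * (v j \<bullet> v i))
          - (\<Sum>k\<in>UNIV. d k * G $ i $ k))"
        by (simp add: Smv inner_diff_right inner_add_right inner_sum_right G_def power2_eq_square inner_commute mult_ac)
      also have "\<dots> = 0" by (simp add: dG c_def sum.distrib mult_ac sum_distrib_left)
      finally show ?thesis .
    qed
    show "block_apply B x \<in> Vsym' v"
      unfolding PS Vsym'_def using Ssym Sdiag by blast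
    fix w assume "w \<in> Vsym' v"
    from \<open>w \<in> Vsym' v\<close> obtain T where wT: "w = vecSV T v" and Tsym: "transpose T = T"
      and Tdiag: "\<forall>i. v i \<bullet> (T *v v i) = 0"
      unfolding Vsym'_def by blast
    have symT: "a \<bullet> (T *v b) = (T *v a) \<bullet> b" for a b using sym_inner[OF Tsym] .
    define F where "F i j = (v j \<bullet> v i) * ((T *v x $ j) \<bullet> v i) + (x $ j \<bullet> v i) * ((T *v v j) \<bullet> v i)" for i j
    define H where "H i k = d k * ((v k \<bullet> v i) * ((T *v v k) \<bullet> v i))" for i k
    have pt: "(S *v v i) \<bullet> (T *v v i) = (r / N) * ((1/2) * (\<Sum>j\<in>UNIV. F i j) - (\<Sum>k\<in>UNIV. H i k))" for i
      by (simp add: Smv inner_diff_left inner_add_left inner_sum_left) (simp add: F_def H_def symT mult_ac)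
    have sF: "(\<Sum>i\<in>UNIV. \<Sum>j\<in>UNIV. F i j) = (N / r) * (\<Sum>j\<in>UNIV. 2 * (x $ j \<bullet> (T *v v j)))"
    proof -
      have "(\<Sum>i\<in>UNIV. \<Sum>j\<in>UNIV. F i j) = (\<Sum>j\<in>UNIV. \<Sum>i\<in>UNIV. F i j)" by (rule sum.swap)
      also have "\<dots> = (\<Sum>j\<in>UNIV. (N / r) * (2 * (x $ j \<bullet> (T *v v j))))"
      proof (rule sum.cong[OF refl])
        fix j
        have "v j \<bullet> (T *v x $ j) = x $ j \<bullet> (T *v v j)"
          by (metis symT inner_commute)
        then show "(\<Sum>i\<in>UNIV. F i j) = (N / r) * (2 * (x $ j \<bullet> (T *v v j)))"
          by (simp add: F_def sum.distrib TF)
      qed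
      finally show ?thesis by (simp add: sum_distrib_left)
    qed
    have sH: "(\<Sum>i\<in>UNIV. \<Sum>k\<in>UNIV. H i k) = 0"
    proof -
      have "(\<Sum>i\<in>UNIV. \<Sum>k\<in>UNIV. H i k) = (\<Sum>k\<in>UNIV. \<Sum>i\<in>UNIV. H i k)" by (rule sum.swap)
      also have "\<dots> = (\<Sum>k\<in>UNIV. d k * ((N / r) * (v k \<bullet> (T *v v k))))"
        by (simp add: H_def sum_distrib_left[symmetric] TF)
      also have "\<dots> = 0" using Tdiag by simp
      finally show ?thesis .
    qed
    have key: "(\<Sum>i\<in>UNIV. (S *v v i) \<bullet> (T *v v i)) = (\<Sum>j\<in>UNIV. x $ j \<bullet> (T *v v j))"
    proof -
      have "(\<Sum>i\<in>UNIV. (S *v v i) \<bullet> (T *v v i)) = (r / N) * ((1/2) * (\<Sum>i\<in>UNIV. \<Sum>j\<in>UNIV. F i j) - (\<Sum>i\<in>UNIV. \<Sum>k\<in>UNIV. H i k))"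
        by (simp add: pt sum_distrib_left sum_subtractf right_diff_distrib)
      also have "\<dots> = (\<Sum>j\<in>UNIV. x $ j \<bullet> (T *v v j))"
        using Npos rpos by (simp add: sF sH sum_distrib_left[symmetric])
      finally show ?thesis .
    qed
    show "inner (x - block_apply B x) w = 0"
      unfolding PS wT inner_vec_def[where x="x - vecSV S v"] using key
      by (simp add: vecSV_def inner_diff_left sum_subtractf)
  qed
qed

end
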